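(* Let $G$ be a non-abelian subgroup of $\mathcal{H}(n,\mathbb{C})$ with $\Lambda_G\not\subset\mathbb{R}$ and $G\not\subset\mathcal{SR}_n$, and let $U=\mathbb{C}^n\setminus E_G$. The following are equivalent: (1) $G$ has a dense orbit in $\mathbb{C}^n$; (2) every orbit $G(z)$ with $z\in U$ is dense in $\mathbb{C}^n$; (3) either $E_G=\mathbb{C}^n$, or $\dim_{\mathbb{C}}E_G=n-1$ and $\overline{\Lambda_G}=\mathbb{C}$.
   Context: $\mathcal{H}(n,\mathbb{C})$ is the group of all maps $z\mapsto\lambda z+b$ of $\mathbb{C}^n$ with $\lambda\in\mathbb{C}^*$, $b\in\mathbb{C}^n$ ($\lambda$ = ratio); $\mathcal{T}_n$ = translations; every element of $\mathcal{H}(n,\mathbb{C})\setminus\mathcal{T}_n$ has a unique fixed point, its center. $H_2=(\frac{\pi}{2}+\pi\mathbb{Z})\cup\pi\mathbb{Z}$, $F_2=\{e^{ix}:x\in H_2\}$, $H_3=(\frac{\pi}{3}+\pi\mathbb{Z})\cup(-\frac{\pi}{3}+\pi\mathbb{Z})\cup\pi\mathbb{Z}$, $F_3=\{e^{ix}:x\in H_3\}$; $\mathcal{S}_i\mathcal{R}_n=\{z\mapsto\lambda z+b:\lambda\in F_i, b\in\mathbb{C}^n\}$, $\mathcal{SR}_n=\mathcal{S}_2\mathcal{R}_n\cup\mathcal{S}_3\mathcal{R}_n$. For a subgroup $G$: $G(z)$ is the orbit; $\Lambda_G$ the set of ratios of elements of $G$, $\overline{\Lambda_G}$ its closure in $\mathbb{C}$;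 $\Gamma_G$ the set of centers of elements of $G\setminus\mathcal{T}_n$; $E_G$ the smallest complex affine subspace of $\mathbb{C}^n$ containing $\Gamma_G$. *)

theory Defs
  imports "HOL-Analysis.Analysis"
begin

text \<open>Complex n-space is modelled as complex ^ 'n (n = CARD('n)); complex scalar
  multiplication is (*s).  An element of H(n,C) is a map z |-> lambda z + b.\<close>

definition cplx_homothety :: "complex \<Rightarrow> complex ^ 'n \<Rightarrow> (complex ^ 'n \<Rightarrow> complex ^ 'n)" where
  "cplx_homothety l b = (\<lambda>z. l *s z + b)"

definition Hn :: "(complex ^ 'n \<Rightarrow> complex ^ 'n) set" where
  "Hn = {f. \<exists>l b. l \<noteq> 0 \<and> f = cplx_homothety l b}"

definition Tn :: "(complex ^ 'n \<Rightarrow> complex ^ 'n) set" where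
  "Tn = {f. \<exists>b. f = cplx_homothety 1 b}"

definition subgroup_Hn :: "(complex ^ 'n \<Rightarrow> complex ^ 'n) set \<Rightarrow> bool" where
  "subgroup_Hn G \<longleftrightarrow> G \<subseteq> Hn \<and> id \<in> G \<and> (\<forall>f\<in>G. \<forall>g\<in>G. f \<circ> g \<in> G) \<and> (\<forall>f\<in>G. inv f \<in> G)"

definition ratio :: "(complex ^ 'n \<Rightarrow> complex ^ 'n) \<Rightarrow> complex" where
  "ratio f = (THE l. \<exists>b. f = cplx_homothety l b)"

definition center :: "(complex ^ 'n \<Rightarrow> complex ^ 'n) \<Rightarrow> complex ^ 'n" where
  "center f = (THE z. f z = z)"

definition orbit :: "(complex ^ 'n \<Rightarrow> complex ^ 'n) set \<Rightarrow> complex ^ 'n \<Rightarrow> (complex ^ 'n) set" where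
  "orbit G z = (\<lambda>f. f z) ` G"

definition Lambda :: "(complex ^ 'n \<Rightarrow> complex ^ 'n) set \<Rightarrow> complex set" where
  "Lambda G = ratio ` G"

definition Gamma :: "(complex ^ 'n \<Rightarrow> complex ^ 'n) set \<Rightarrow> (complex ^ 'n) set" where
  "Gamma G = center ` (G - Tn)"

definition cplx_affine :: "(complex ^ 'n) set \<Rightarrow> bool" where
  "cplx_affine S \<longleftrightarrow> (\<forall>x\<in>S. \<forall>y\<in>S. \<forall>t::complex. (1 - t) *s x + t *s y \<in> S)"

definition cplx_affine_hull :: "(complex ^ 'n) set \<Rightarrow> (complex ^ 'n) set" where
  "cplx_affine_hull A = \<Inter>{S. cplx_affine S \<and> A \<subseteq> S}"

definition E_G :: "(complex ^ 'n \<Rightarrow> complex ^ 'n) set \<Rightarrow> (complex ^ 'n) set" where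
  "E_G G = cplx_affine_hull (Gamma G)"

definition cplx_affine_dim :: "(complex ^ 'n) set \<Rightarrow> nat" where
  "cplx_affine_dim S = vec.dim {x - y | x y. x \<in> S \<and> y \<in> S}"

definition H2 :: "real set" where
  "H2 = {pi/2 + pi * of_int k | k. True} \<union> {pi * of_int k | k. True}"
definition F2 :: "complex set" where
  "F2 = {cis x | x. x \<in> H2}"
definition H3 :: "real set" where
  "H3 = {pi/3 + pi * of_int k | k. True} \<union> {- pi/3 + pi * of_int k | k. True}
        \<union> {pi * of_int k | k. True}"
definition F3 :: "complex set" where
  "F3 = {cis x | x. x \<in> H3}"

definition S2Rn :: "(complex ^ 'n \<Rightarrow> complex ^ 'n) set" where
  "S2Rn = {cplx_homothety l b | l b. l \<in> F2}"
definition S3Rn :: "(complex ^ 'n \<Rightarrow> complex ^ 'n) set" where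
  "S3Rn = {cplx_homothety l b | l b. l \<in> F3}"
definition SRn :: "(complex ^ 'n \<Rightarrow> complex ^ 'n) set" where
  "SRn = S2Rn \<union> S3Rn"

end

theory Submission
  imports Defs
begin


lemma hom_apply[simp]: "cplx_homothety l b z = l *s z + b"
  by (simp add: cplx_homothety_def)

lemma hom_comp: "cplx_homothety l b \<circ> cplx_homothety m c = cplx_homothety (l*m) (l *s c + b)"
  by (rule ext) (simp add: vec_eq_iff algebra_simps)

lemma hom_id: "cplx_homothety 1 0 = id"
  by (rule ext) simp

lemma hom_inj:
  assumes "cplx_homothety l b = (cplx_homothety m c :: complex^'n \<Rightarrow> complex^'n)"
  shows "l = m \<and> b = c"
proof -
  have b: "b = c" using fun_cong[OF assms, of 0] by simp
  have "(l *s vec 1 + b) $ (undefined::'n) = (m *s vec 1 + b) $ undefined"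
    using fun_cong[OF assms, of "vec 1"] b by simp
  then show ?thesis using b by simp
qed

lemma ratio_hom[simp]: "ratio (cplx_homothety l b) = l"
  unfolding ratio_def by (rule the_equality) (auto dest: hom_inj)

lemma inv_hom:
  assumes "l \<noteq> 0"
  shows "inv (cplx_homothety l b) = cplx_homothety (inverse l) (- (inverse l *s b))"
  by (rule inv_unique_comp) (use assms in \<open>auto simp: hom_comp vec_eq_iff field_simps intro!: ext\<close>)

lemma center_hom:
  assumes "l \<noteq> 1"
  shows "center (cplx_homothety l b) = (1/(1-l)) *s b"
  unfolding center_def
proof (rule the_equality)
  have "1 - l \<noteq> 0" using assms by simp
  then show "cplx_homothety l b ((1/(1-l)) *s b) = (1/(1-l)) *s b"
    by (simp add: vec_eq_iff field_simps)
next
  fix z assume "cplx_homothety l b z = z"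
  then have h: "l * z$i + b$i = z$i" for i by (simp add: vec_eq_iff)
  have "1 - l \<noteq> 0" using assms by simp
  have "z$i = b$i / (1 - l)" for i
  proof -
    have "(1 - l) * z$i = b$i" using h[of i] by (simp add: algebra_simps)
    then show ?thesis using \<open>1 - l \<noteq> 0\<close> by (simp add: field_simps)
  qed
  then show "z = (1/(1-l)) *s b" by (simp add: vec_eq_iff)
qed

lemma Tn_hom: "cplx_homothety l b \<in> Tn \<longleftrightarrow> l = 1"
  unfolding Tn_def by (auto dest: hom_inj)

lemma norm_smult_vec: "norm (a *s (x::complex^'n)) = cmod a * norm x"
  unfolding norm_vec_def
  by (simp add: L2_set_right_distrib norm_mult)

lemma tendsto_smult_vec:
  fixes g :: "_ \<Rightarrow> complex^'n"
  assumes "(f \<longlongrightarrow> a) F" "(g \<longlongrightarrow> x) F"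
  shows "((\<lambda>t. f t *s g t) \<longlongrightarrow> a *s x) F"
  by (rule vec_tendstoI) (simp add: tendsto_mult assms tendsto_vec_nth)

lemma continuous_smult_vec: "continuous_on S (\<lambda>x::complex^'n. a *s x)"
  unfolding continuous_on_def
  by (intro ballI tendsto_smult_vec tendsto_const tendsto_ident_at)


lemma sep_functional:
  fixes S :: "(complex^'n) set"
  assumes "vec.subspace S" "u \<notin> S"
  shows "\<exists>\<phi>. continuous_on UNIV \<phi> \<and> (\<forall>x\<in>S. \<phi> x = 0) \<and> \<phi> u = 1
      \<and> (\<forall>a x. \<phi> (a *s x) = a * \<phi> x) \<and> (\<forall>x y. \<phi> (x + y) = \<phi> x + \<phi> y)"
proof -
  obtain B where B: "B \<subseteq> S" "vec.independent B" "S \<subseteq> vec.span B"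
    by (meson vec.basis_exists)
  have "vec.span B \<subseteq> S" by (rule vec.span_minimal[OF B(1) assms(1)])
  then have uB: "u \<notin> vec.span B" using assms(2) by auto
  have ind: "vec.independent (insert u B)"
    using B uB by (simp add: vec.independent_insert)
  define f where "f = vec.construct (insert u B) (\<lambda>b. if b = u then (vec 1 :: complex^'n) else 0)"
  have lin: "Vector_Spaces.linear (*s) (*s) f" unfolding f_def using vec.linear_construct[OF ind] .
  have fu: "f u = vec 1" unfolding f_def by (subst vec.construct_basis[OF ind]) auto
  have fB: "f b = 0" if "b \<in> B" for b
    using that uB vec.span_base[OF that] unfolding f_def
    by (subst vec.construct_basis[OF ind]) auto
  have fS: "f x = 0" if "x \<in> S" for x
    by (rule vec.linear_eq_0_on_span[OF lin fB]) (use B(3) that in auto)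
  define \<phi> where "\<phi> x = f x $ (undefined::'n)" for x
  have rep: "\<phi> x = (\<Sum>i\<in>UNIV. x$i * (f (axis i 1) $ undefined))" for x
    unfolding \<phi>_def by (rule linear_componentwise[OF lin])
  have "continuous_on UNIV \<phi>"
  proof -
    have c: "continuous_on UNIV (\<lambda>x::complex^'n. x $ i)" for i
      by (rule linear_continuous_on) (rule bounded_linear_vec_nth)
    show ?thesis unfolding rep
      by (intro continuous_on_sum continuous_on_mult_right c) 
  qed
  moreover have "\<forall>x\<in>S. \<phi> x = 0" using fS by (simp add: \<phi>_def)
  moreover have "\<phi> u = 1" by (simp add: \<phi>_def fu)
  moreover have "\<forall>a x. \<phi> (a *s x) = a * \<phi> x"
    using vec.linear_scale[OF lin] by (simp add: \<phi>_def)
  moreover have "\<forall>x y. \<phi> (x + y) = \<phi> x + \<phi> y"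
    using vec.linear_add[OF lin] by (simp add: \<phi>_def)
  ultimately show ?thesis by (intro exI[of _ \<phi>]) simp
qed


lemma aff3:
  assumes "cplx_affine E" "x \<in> E" "y \<in> E" "z \<in> E"
  shows "x + y - z \<in> E"
proof -
  have m: "(1 - 1/2) *s x + (1/2) *s y \<in> E" using assms unfolding cplx_affine_def by blast
  have "(1 - 2) *s z + 2 *s ((1 - 1/2) *s x + (1/2) *s y) \<in> E"
    using assms(1,4) m unfolding cplx_affine_def by blast
  moreover have "(1 - 2) *s z + 2 *s ((1 - 1/2) *s x + (1/2) *s y) = x + y - z"
    by (simp add: vec_eq_iff algebra_simps)
  ultimately show ?thesis by simp
qed

lemma hull_affine: "cplx_affine (cplx_affine_hull A)"
  unfolding cplx_affine_hull_def cplx_affine_def by blast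

lemma hull_sub: "A \<subseteq> cplx_affine_hull A"
  unfolding cplx_affine_hull_def by blast

lemma hull_min: "cplx_affine S \<Longrightarrow> A \<subseteq> S \<Longrightarrow> cplx_affine_hull A \<subseteq> S"
  unfolding cplx_affine_hull_def by blast

lemma dir_mem:
  assumes "cplx_affine E" "c \<in> E"
  shows "v \<in> {x - y | x y. x \<in> E \<and> y \<in> E} \<longleftrightarrow> c + v \<in> E"
proof
  assume "v \<in> {x - y | x y. x \<in> E \<and> y \<in> E}"
  then obtain x y where "v = x - y" "x \<in> E" "y \<in> E" by blast
  then show "c + v \<in> E" using aff3[OF assms(1) \<open>c \<in> E\<close> \<open>x \<in> E\<close> \<open>y \<in> E\<close>]
    by (simp add: add_diff_eq)
next
  assume "c + v \<in> E"
  then show "v \<in> {x - y | x y. x \<in> E \<and> y \<in> E}" using assms(2)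
    by (intro CollectI exI[of _ "c + v"] exI[of _ c]) simp
qed

lemma dir_subspace:
  assumes "cplx_affine E" "c \<in> E"
  shows "vec.subspace {x - y | x y. x \<in> E \<and> y \<in> E}"
  unfolding vec.subspace_def
proof (intro conjI ballI allI)
  note dm = dir_mem[OF assms]
  show "0 \<in> {x - y | x y. x \<in> E \<and> y \<in> E}" using dm assms(2) by simp
  fix v w assume v: "v \<in> {x - y | x y. x \<in> E \<and> y \<in> E}" and w: "w \<in> {x - y | x y. x \<in> E \<and> y \<in> E}"
  have "(c + v) + (c + w) - c \<in> E" using aff3[OF assms(1)] v w dm assms(2) by blast
  then show "v + w \<in> {x - y | x y. x \<in> E \<and> y \<in> E}" using dm by (simp add: algebra_simps)
next
  note dm = dir_mem[OF assms]
  fix a :: complex and v assume v: "v \<in> {x - y | x y. x \<in> E \<and> y \<in> E}"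
  have "(1 - a) *s c + a *s (c + v) \<in> E" using assms v dm unfolding cplx_affine_def by blast
  moreover have "(1 - a) *s c + a *s (c + v) = c + a *s v" by (simp add: vec_eq_iff algebra_simps)
  ultimately show "a *s v \<in> {x - y | x y. x \<in> E \<and> y \<in> E}" using dm by simp
qed

lemma closure_add_closed:
  fixes T :: "'a::real_normed_vector set"
  assumes "\<And>x y. x \<in> T \<Longrightarrow> y \<in> T \<Longrightarrow> x + y \<in> T" "x \<in> closure T" "y \<in> closure T"
  shows "x + y \<in> closure T"
proof -
  obtain f where f: "\<forall>n. f n \<in> T" "f \<longlonglongrightarrow> x" using assms(2) unfolding closure_sequential by blast
  obtain g where g: "\<forall>n. g n \<in> T" "g \<longlonglongrightarrow> y" using assms(3) unfolding closure_sequential by blast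
  have "\<forall>n. f n + g n \<in> T" using f(1) g(1) assms(1) by simp
  moreover have "(\<lambda>n. f n + g n) \<longlonglongrightarrow> x + y" using f(2) g(2) by (rule tendsto_add)
  ultimately show ?thesis unfolding closure_sequential by (intro exI[of _ "\<lambda>n. f n + g n"] conjI)
qed

lemma closure_map_closed:
  assumes "continuous_on UNIV h" "\<And>x. x \<in> T \<Longrightarrow> h x \<in> T" "x \<in> closure T"
  shows "h x \<in> closure T"
proof -
  have "h ` closure T \<subseteq> closure T"
  proof (rule image_closure_subset)
    show "continuous_on (closure T) h" using continuous_on_subset[OF assms(1)] by blast
    show "closed (closure T)" by simp
    show "h ` T \<subseteq> closure T" using assms(2) closure_subset by blast
  qed
  then show ?thesis using assms(3) by blast
qed



lemma F2I: "cis (pi/2 + pi * of_int k) \<in> F2" "cis (pi * of_int k) \<in> F2"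
  unfolding F2_def H2_def by blast+

lemma F3I: "cis (pi/3 + pi * of_int k) \<in> F3" "cis (- pi/3 + pi * of_int k) \<in> F3"
  unfolding F3_def H3_def by blast+

lemma cis_plus_pi: "cis (x + pi * of_int 1) = - cis x"
  by (simp add: complex_eq_iff cos_add sin_add)

lemma cis_minus_pi: "cis (x + pi * of_int (-1)) = - cis x"
proof -
  have "cis (x + pi * of_int (-1)) = cis x * cis (- pi)" by (simp add: cis_mult)
  then show ?thesis by (simp add: cis_def complex_eq_iff)
qed

lemma unit_classify:
  fixes l :: complex
  assumes "cmod l = 1" "2 * Re l \<in> \<int>"
  shows "l \<in> F2 \<or> l \<in> F3"
proof -
  obtain m where m: "2 * Re l = of_int m" using assms(2) Ints_cases by metis
  have n: "Re l ^ 2 + Im l ^ 2 = 1" using assms(1) unfolding cmod_def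
    by (metis abs_norm_cancel real_sqrt_abs real_sqrt_eq_1_iff real_sqrt_power two_realpow_ge_one cmod_power2 norm_one power_one)
  have "\<bar>Re l\<bar> \<le> 1" using abs_Re_le_cmod[of l] assms(1) by simp
  then have "m \<in> {-2,-1,0,1,2}" using m by auto
  then consider "m = -2" | "m = -1" | "m = 0" | "m = 1" | "m = 2" by blast
  then show ?thesis
  proof cases
    case 1
    then have "Re l = -1" "Im l = 0" using m n by (auto simp: power2_eq_square)
    then have "l = cis (pi * of_int 1)" by (simp add: complex_eq_iff)
    then show ?thesis using F2I by blast
  next
    case 5
    then have "Re l = 1" "Im l = 0" using m n by (auto simp: power2_eq_square)
    then have "l = cis (pi * of_int 0)" by (simp add: complex_eq_iff)
    then show ?thesis using F2I by blast
  next
    case 3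
    then have "Re l = 0" "Im l ^ 2 = 1 ^ 2" using m n by auto
    then have "Re l = 0" "Im l = 1 \<or> Im l = -1" using power2_eq_iff by blast+
    then have "l = cis (pi/2 + pi * of_int 0) \<or> l = cis (pi/2 + pi * of_int (-1))"
      by (auto simp: complex_eq_iff cos_diff sin_diff)
    then show ?thesis using F2I by blast
  next
    case 4
    then have r: "Re l = 1/2" using m by simp
    then have "Im l ^ 2 = (sqrt 3 / 2) ^ 2" using n[unfolded r] by (simp add: power_divide power2_eq_square)
    with r have "Re l = 1/2" "Im l ^ 2 = (sqrt 3 / 2) ^ 2" by auto
    then have "Re l = 1/2" "Im l = sqrt 3 / 2 \<or> Im l = - (sqrt 3 / 2)" using power2_eq_iff by blast+
    then have "l = cis (pi/3 + pi * of_int 0) \<or> l = cis (- pi/3 + pi * of_int 0)"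
      by (auto simp: complex_eq_iff cos_60 sin_60)
    then show ?thesis using F3I by blast
  next
    case 2
    then have r: "Re l = -1/2" using m by simp
    then have "Im l ^ 2 = (sqrt 3 / 2) ^ 2" using n[unfolded r] by (simp add: power_divide power2_eq_square)
    with r have "Re l = -1/2" "Im l ^ 2 = (sqrt 3 / 2) ^ 2" by auto
    then have "Re l = -1/2" "Im l = sqrt 3 / 2 \<or> Im l = - (sqrt 3 / 2)" using power2_eq_iff by blast+
    then have "- l = cis (pi/3) \<or> - l = cis (- pi/3)"
      by (auto simp: complex_eq_iff cos_60 sin_60)
    moreover have "cis (- pi/3 + pi * of_int 1) = - cis (- pi/3)"
      "cis (pi/3 + pi * of_int (-1)) = - cis (pi/3)"
      by (rule cis_plus_pi, rule cis_minus_pi)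
    ultimately have "l = cis (- pi/3 + pi * of_int 1) \<or> l = cis (pi/3 + pi * of_int (-1))"
      by (metis minus_minus)
    then show ?thesis using F3I by blast
  qed
qed


lemma ring_dense:
  fixes M :: "complex set"
  assumes cl: "closed M" and one: "1 \<in> M"
    and add: "\<And>x y. x \<in> M \<Longrightarrow> y \<in> M \<Longrightarrow> x + y \<in> M"
    and neg: "\<And>x. x \<in> M \<Longrightarrow> - x \<in> M"
    and mul: "\<And>x y. x \<in> M \<Longrightarrow> y \<in> M \<Longrightarrow> x * y \<in> M"
    and mu: "\<mu> \<in> M" "Im \<mu> \<noteq> 0"
    and lam: "l \<in> M" "inverse l \<in> M" "l \<noteq> 0" "l \<notin> F2" "l \<notin> F3"
  shows "M = UNIV"
proof -
  have zero: "0 \<in> M" using add[OF one neg[OF one]] by simp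
  have sub: "x - y \<in> M" if "x \<in> M" "y \<in> M" for x y
    using add[OF that(1) neg[OF that(2)]] by simp
  have nat: "of_nat k \<in> M" for k
    by (induction k) (auto simp: zero add one)
  have int: "of_int k \<in> M" for k
  proof (cases "k \<ge> 0")
    case True then show ?thesis using nat[of "nat k"] by simp
  next
    case False then show ?thesis using neg[OF nat[of "nat (-k)"]] by simp
  qed
  have pow: "x ^ k \<in> M" if "x \<in> M" for x k
    by (induction k) (auto simp: one mul that)
  show ?thesis
  proof (cases "\<forall>e>0. \<exists>r\<in>M. r \<noteq> 0 \<and> cmod r < e")
    case True
    have "w \<in> closure M" for w
    proof (unfold closure_approachable, intro allI impI)
      fix e :: real assume e: "e > 0"
      have "e / (1 + cmod \<mu>) > 0" using e by (simp add: add_pos_nonneg)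
      then obtain r where r: "r \<in> M" "r \<noteq> 0" "cmod r < e / (1 + cmod \<mu>)" using True by blast
      define q where "q = w / r"
      define b where "b = Im q / Im \<mu>"
      define a where "a = Re q - b * Re \<mu>"
      have qab: "q = of_real a + of_real b * \<mu>"
        using mu(2) by (simp add: complex_eq_iff a_def b_def)
      define y where "y = of_int \<lfloor>a\<rfloor> * r + of_int \<lfloor>b\<rfloor> * \<mu> * r"
      have yM: "y \<in> M" unfolding y_def by (intro add mul int r mu)
      have "w - y = of_real (a - \<lfloor>a\<rfloor>) * r + of_real (b - \<lfloor>b\<rfloor>) * \<mu> * r"
        using r(2) qab unfolding y_def q_def by (simp add: field_simps)
      then have "cmod (w - y) \<le> (a - \<lfloor>a\<rfloor>) * cmod r + (b - \<lfloor>b\<rfloor>) * cmod \<mu> * cmod r"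
        by (metis (no_types, lifting) norm_triangle_ineq norm_mult norm_of_real
            abs_of_nonneg of_int_floor_le diff_ge_0_iff_ge)
      also have "\<dots> \<le> 1 * cmod r + 1 * cmod \<mu> * cmod r"
      proof -
        have "a - \<lfloor>a\<rfloor> \<le> 1" "b - \<lfloor>b\<rfloor> \<le> 1"
          using frac_lt_1[of a] frac_lt_1[of b] by (auto simp: frac_def)
        then show ?thesis by (intro add_mono mult_right_mono mult_mono) auto
      qed
      also have "\<dots> = (1 + cmod \<mu>) * cmod r" by (simp add: algebra_simps)
      also have "\<dots> < e" using r(3) by (simp add: field_simps add_pos_nonneg)
      finally show "\<exists>y\<in>M. dist y w < e" using yM by (auto simp: dist_norm norm_minus_commute)
    qed
    then show ?thesis using cl closure_closed by auto
  next
    case False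
    then obtain e where e: "e > 0" "\<And>r. r \<in> M \<Longrightarrow> r \<noteq> 0 \<Longrightarrow> e \<le> cmod r"
      by (auto simp: not_less)
    have small: False if hx: "x \<in> M" "x \<noteq> 0" "cmod x < 1" for x
    proof -
      obtain k where "cmod x ^ k < e" using real_arch_pow_inv[OF e(1) hx(3)] by blast
      moreover have "e \<le> cmod (x ^ k)" using e(2)[OF pow[OF hx(1)]] hx(2) by simp
      ultimately show False by (simp add: norm_power)
    qed
    have a0: "\<not> cmod l < 1" using small lam by blast
    have "\<not> cmod (inverse l) < 1" using small[of "inverse l"] lam by auto
    then have a2: "\<not> inverse (cmod l) < 1" by (simp add: norm_inverse)
    have a1: "\<not> cmod l < 1" "\<not> inverse (cmod l) < 1" using a0 a2 by blast+
    have nl: "cmod l = 1"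
    proof (rule ccontr)
      assume "cmod l \<noteq> 1"
      then have "1 < cmod l" using a1(1) by simp
      then have "inverse (cmod l) < 1" by (simp add: inverse_less_1_iff)
      then show False using a1(2) by simp
    qed
    have "l * cnj l = 1" using nl by (simp add: complex_norm_square[symmetric])
    then have "inverse l = cnj l" by (rule inverse_unique)
    then have xM: "of_real (2 * Re l) \<in> M" using add[OF lam(1) lam(2)] by (simp add: complex_add_cnj)
    define r where "r = 2 * Re l"
    have fM: "of_real (r - \<lfloor>r\<rfloor>) \<in> M" using sub[OF xM int[of "\<lfloor>r\<rfloor>"]] by (simp add: r_def)
    have "r - \<lfloor>r\<rfloor> = 0"
    proof (rule ccontr)
      assume "r - \<lfloor>r\<rfloor> \<noteq> 0"
      moreover have "0 \<le> r - \<lfloor>r\<rfloor>" "r - \<lfloor>r\<rfloor> < 1" using frac_lt_1[of r] frac_ge_0[of r] by (auto simp: frac_def)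
      ultimately have "cmod (of_real (r - \<lfloor>r\<rfloor>)) < 1" "(of_real (r - \<lfloor>r\<rfloor>) :: complex) \<noteq> 0"
        by ((simp_all only: norm_of_real abs_of_nonneg of_real_eq_0_iff), simp_all)
      then show False using small[OF fM] by blast
    qed
    then have "2 * Re l \<in> \<int>" unfolding r_def by (metis Ints_of_int eq_iff_diff_eq_0)
    then have "l \<in> F2 \<or> l \<in> F3" using unit_classify nl by blast
    then show ?thesis using lam by blast
  qed
qed



theorem corollary1p4:
  fixes G :: "(complex ^ 'n \<Rightarrow> complex ^ 'n) set"
  assumes "subgroup_Hn G"
    and "\<exists>f\<in>G. \<exists>g\<in>G. f \<circ> g \<noteq> g \<circ> f"
    and "\<not> Lambda G \<subseteq> \<real>"
    and "\<not> G \<subseteq> SRn"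
  shows "((\<exists>z. closure (orbit G z) = UNIV)
           \<longleftrightarrow> (\<forall>z \<in> UNIV - E_G G. closure (orbit G z) = UNIV))
       \<and> ((\<forall>z \<in> UNIV - E_G G. closure (orbit G z) = UNIV)
           \<longleftrightarrow> (E_G G = UNIV \<or>
                (cplx_affine_dim (E_G G) = CARD('n) - 1 \<and> closure (Lambda G) = UNIV)))"
proof -
  have GH: "G \<subseteq> Hn" and Gid: "id \<in> G" and Gcomp: "\<And>f g. f \<in> G \<Longrightarrow> g \<in> G \<Longrightarrow> f \<circ> g \<in> G"
    and Ginv: "\<And>f. f \<in> G \<Longrightarrow> inv f \<in> G"
    using assms(1) unfolding subgroup_Hn_def by auto
  have Gform: "\<exists>l b. l \<noteq> 0 \<and> f = cplx_homothety l b" if "f \<in> G" for f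
    using GH that unfolding Hn_def by blast
  define T where "T = {b. cplx_homothety 1 b \<in> G}"
  have T0: "0 \<in> T" unfolding T_def by (simp add: hom_id Gid)
  have Tadd: "b + c \<in> T" if "b \<in> T" "c \<in> T" for b c
  proof -
    have "cplx_homothety 1 b \<circ> cplx_homothety 1 c \<in> G" using that Gcomp unfolding T_def by blast
    then show ?thesis by (simp add: hom_comp T_def add.commute)
  qed
  have Tneg: "- b \<in> T" if "b \<in> T" for b
    using Ginv[of "cplx_homothety 1 b"] that by (simp add: T_def inv_hom)
  have Tconj: "l *s t \<in> T" if "cplx_homothety l p \<in> G" "l \<noteq> 0" "t \<in> T" for l p t
  proof -
    have "(cplx_homothety l p \<circ> cplx_homothety 1 t) \<circ> inv (cplx_homothety l p) \<in> G"
      using that Gcomp Ginv unfolding T_def by blast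
    also have "(cplx_homothety l p \<circ> cplx_homothety 1 t) \<circ> inv (cplx_homothety l p) = cplx_homothety 1 (l *s t)"
      using that(2) by (simp add: inv_hom hom_comp vec_eq_iff field_simps)
    finally show ?thesis by (simp only: T_def mem_Collect_eq)
  qed
  have Lam: "\<exists>p. cplx_homothety l p \<in> G \<and> l \<noteq> 0" if "l \<in> Lambda G" for l
    using that Gform unfolding Lambda_def by fastforce
  have LamI: "l \<in> Lambda G" if "cplx_homothety l p \<in> G" for l p
    using that unfolding Lambda_def by (metis image_eqI ratio_hom)
  define C where "C = closure T"
  have Cadd: "x + y \<in> C" if "x \<in> C" "y \<in> C" for x y
    using closure_add_closed[of T x y] Tadd that unfolding C_def by blast
  have Cneg: "- x \<in> C" if "x \<in> C" for x
  proof -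
    have "continuous_on UNIV (uminus :: complex^'n \<Rightarrow> _)" by (intro continuous_intros)
    then show ?thesis using closure_map_closed[of uminus T x] Tneg that unfolding C_def by blast
  qed
  have Csub: "x - y \<in> C" if "x \<in> C" "y \<in> C" for x y
    using Cadd[OF that(1) Cneg[OF that(2)]] by simp
  have Cscale: "l *s x \<in> C" if hl: "l \<in> Lambda G" "x \<in> C" for l x
  proof -
    obtain p where p: "cplx_homothety l p \<in> G" "l \<noteq> 0" using Lam[OF hl(1)] by blast
    show ?thesis using closure_map_closed[of "\<lambda>x. l *s x" T x] Tconj[OF p] hl(2)
      continuous_smult_vec unfolding C_def by blast
  qed
  have TC: "T \<subseteq> C" unfolding C_def by (rule closure_subset)
  define M where "M = {\<mu>. \<forall>x\<in>C. \<mu> *s x \<in> C}"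
  have "M = UNIV"
  proof -
    obtain f where f: "f \<in> G" "f \<notin> SRn" using assms(4) by blast
    obtain l b where lb: "l \<noteq> 0" "f = cplx_homothety l b" using Gform[OF f(1)] by blast
    have lF: "l \<notin> F2" "l \<notin> F3" using f(2) lb unfolding SRn_def S2Rn_def S3Rn_def by blast+
    have lL: "l \<in> Lambda G" using LamI f(1) lb by blast
    have ilL: "inverse l \<in> Lambda G" using LamI[of "inverse l"] Ginv[OF f(1)] lb by (simp add: inv_hom)
    obtain \<mu> where mu: "\<mu> \<in> Lambda G" "Im \<mu> \<noteq> 0" using assms(3) complex_is_Real_iff by blast
    have LM: "x \<in> M" if "x \<in> Lambda G" for x using Cscale that unfolding M_def by blast
    show ?thesis
    proof (rule ring_dense[where \<mu>=\<mu> and l=l])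
      show "closed M" unfolding closed_sequential_limits
      proof (intro allI impI, elim conjE)
        fix s m assume s: "\<forall>n. s n \<in> M" "s \<longlonglongrightarrow> m"
        show "m \<in> M" unfolding M_def
        proof (intro CollectI ballI)
          fix x assume x: "x \<in> C"
          have "(\<lambda>n. s n *s x) \<longlonglongrightarrow> m *s x" by (rule tendsto_smult_vec[OF s(2) tendsto_const])
          moreover have "\<forall>n. s n *s x \<in> C" using s(1) x unfolding M_def by blast
          ultimately show "m *s x \<in> C" 
            using closed_sequentially[of C "\<lambda>n. s n *s x" "m *s x"] unfolding C_def by simp
        qed
      qed
      show "1 \<in> M" unfolding M_def by simp
      show "x + y \<in> M" if hxy: "x \<in> M" "y \<in> M" for x y
        unfolding M_def
      proof (intro CollectI ballI)
        fix v assume "v \<in> C"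
        have "x *s v \<in> C" "y *s v \<in> C" using hxy \<open>v \<in> C\<close> by (simp_all add: M_def)
        then have "x *s v + y *s v \<in> C" by (rule Cadd)
        moreover have "(x + y) *s v = x *s v + y *s v" by (simp add: vec_eq_iff algebra_simps)
        ultimately show "(x + y) *s v \<in> C" by (simp only:)
      qed
      show "- x \<in> M" if hx: "x \<in> M" for x
        unfolding M_def
      proof (intro CollectI ballI)
        fix v assume "v \<in> C"
        have "x *s v \<in> C" using hx \<open>v \<in> C\<close> by (simp add: M_def)
        then have "- (x *s v) \<in> C" by (rule Cneg)
        moreover have "(- x) *s v = - (x *s v)" by (simp add: vec_eq_iff)
        ultimately show "(- x) *s v \<in> C" by (simp only:)
      qed
      show "x * y \<in> M" if hxy: "x \<in> M" "y \<in> M" for x y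
        unfolding M_def
      proof (intro CollectI ballI)
        fix v assume "v \<in> C"
        have "y *s v \<in> C" using hxy \<open>v \<in> C\<close> by (simp add: M_def)
        then have "x *s (y *s v) \<in> C" using hxy(1) unfolding M_def mem_Collect_eq by (rule_tac bspec)
        moreover have "(x * y) *s v = x *s (y *s v)" by (simp add: vec_eq_iff)
        ultimately show "(x * y) *s v \<in> C" by (simp only:)
      qed
      show "\<mu> \<in> M" "Im \<mu> \<noteq> 0" "l \<in> M" "inverse l \<in> M" "l \<noteq> 0" "l \<notin> F2" "l \<notin> F3"
        using mu LM lL ilL lb lF by blast+
    qed
  qed
  then have Cfull: "a *s x \<in> C" if "x \<in> C" for a x
    using that unfolding M_def by blast
  have Gam: "\<exists>l p. l \<noteq> 0 \<and> l \<noteq> 1 \<and> cplx_homothety l p \<in> G \<and> a = (1/(1-l)) *s p"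
    if ha: "a \<in> Gamma G" for a
  proof -
    obtain f where f: "f \<in> G" "f \<notin> Tn" "a = center f" using ha unfolding Gamma_def by blast
    obtain l p where lp: "l \<noteq> 0" "f = cplx_homothety l p" using Gform[OF f(1)] by blast
    have "l \<noteq> 1" using f(2) lp by (simp add: Tn_hom)
    then show ?thesis using f lp center_hom by blast
  qed
  have GamI: "(1/(1-l)) *s p \<in> Gamma G" if "cplx_homothety l p \<in> G" "l \<noteq> 1" for l p
  proof -
    have "cplx_homothety l p \<in> G - Tn" using that by (simp add: Tn_hom)
    then show ?thesis unfolding Gamma_def using center_hom[OF that(2)] by (metis image_eqI)
  qed
  obtain f0 g0 where fg0: "f0 \<in> G" "g0 \<in> G" "f0 \<circ> g0 \<noteq> g0 \<circ> f0" using assms(2) by blast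
  obtain l0 p0 where lp0: "l0 \<noteq> 0" "l0 \<noteq> 1" "cplx_homothety l0 p0 \<in> G"
  proof -
    obtain l1 p1 where 1: "l1 \<noteq> 0" "f0 = cplx_homothety l1 p1" using Gform[OF fg0(1)] by blast
    obtain l2 p2 where 2: "l2 \<noteq> 0" "g0 = cplx_homothety l2 p2" using Gform[OF fg0(2)] by blast
    have "l1 \<noteq> 1 \<or> l2 \<noteq> 1"
    proof (rule ccontr)
      assume "\<not> (l1 \<noteq> 1 \<or> l2 \<noteq> 1)"
      then have "f0 \<circ> g0 = g0 \<circ> f0" using 1 2 by (simp add: hom_comp add.commute)
      then show False using fg0(3) by simp
    qed
    then show ?thesis using that 1 2 fg0 by blast
  qed
  define c0 where "c0 = (1/(1-l0)) *s p0"
  have c0G: "c0 \<in> Gamma G" unfolding c0_def using GamI lp0 by blast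
  have K1: "b - a \<in> C" if hab: "a \<in> Gamma G" "b \<in> Gamma G" for a b
  proof -
    obtain l p where a: "l \<noteq> 0" "l \<noteq> 1" "cplx_homothety l p \<in> G" "a = (1/(1-l)) *s p"
      using Gam[OF hab(1)] by blast
    obtain m q where b: "m \<noteq> 0" "m \<noteq> 1" "cplx_homothety m q \<in> G" "b = (1/(1-m)) *s q"
      using Gam[OF hab(2)] by blast
    define X where "X = (l *s q + p) - (m *s p + q)"
    have "(cplx_homothety l p \<circ> cplx_homothety m q) \<circ> inv (cplx_homothety m q \<circ> cplx_homothety l p) \<in> G"
      using a b Gcomp Ginv by blast
    also have "(cplx_homothety l p \<circ> cplx_homothety m q) \<circ> inv (cplx_homothety m q \<circ> cplx_homothety l p)
        = cplx_homothety 1 X"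
      unfolding hom_comp using a(1) b(1) by (simp add: inv_hom hom_comp X_def vec_eq_iff field_simps)
    finally have "X \<in> C" using TC unfolding T_def by blast
    then have "(1 / ((l - 1) * (1 - m))) *s X \<in> C" by (rule Cfull)
    moreover have "(1 / ((l - 1) * (1 - m))) *s X = b - a"
    proof -
      have d: "(l - 1) * (1 - m) \<noteq> 0" using a b by auto
      have pa: "p = (1 - l) *s a" using a(2) unfolding a(4) by (simp add: vec_eq_iff)
      have qb: "q = (1 - m) *s b" using b(2) unfolding b(4) by (simp add: vec_eq_iff)
      have "X = ((l - 1) * (1 - m)) *s (b - a)" unfolding X_def pa qb
        by (simp add: vec_eq_iff algebra_simps)
      then show ?thesis using d by (simp add: vector_smult_assoc)
    qed
    ultimately show ?thesis by simp
  qed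
  define E where "E = E_G G"
  have Eaff: "cplx_affine E" unfolding E_def E_G_def by (rule hull_affine)
  have GamE: "Gamma G \<subseteq> E" unfolding E_def E_G_def by (rule hull_sub)
  have c0E: "c0 \<in> E" using c0G GamE by blast
  have EC: "x - c0 \<in> C" if "x \<in> E" for x
  proof -
    have "cplx_affine {x. x - c0 \<in> C}" unfolding cplx_affine_def
    proof (intro ballI allI, simp only: mem_Collect_eq)
      fix x y t assume "x - c0 \<in> C" "y - c0 \<in> C"
      then have "(1 - t) *s (x - c0) + t *s (y - c0) \<in> C" using Cadd Cfull by blast
      moreover have "(1 - t) *s (x - c0) + t *s (y - c0) = (1 - t) *s x + t *s y - c0"
        by (simp add: vec_eq_iff algebra_simps)
      ultimately show "(1 - t) *s x + t *s y - c0 \<in> C" by (simp only:)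
    qed
    moreover have "Gamma G \<subseteq> {x. x - c0 \<in> C}" using K1 c0G by blast
    ultimately have "E \<subseteq> {x. x - c0 \<in> C}" unfolding E_def E_G_def by (rule hull_min)
    then show ?thesis using that by blast
  qed
  define D where "D = {x - y | x y. x \<in> E \<and> y \<in> E}"
  have Dsub: "vec.subspace D" unfolding D_def by (rule dir_subspace[OF Eaff c0E])
  have Dmem: "v \<in> D \<longleftrightarrow> c0 + v \<in> E" for v unfolding D_def by (rule dir_mem[OF Eaff c0E])
  have DC: "D \<subseteq> C"
  proof
    fix v assume "v \<in> D"
    then have "c0 + v \<in> E" using Dmem by blast
    then show "v \<in> C" using EC[of "c0 + v"] by simp
  qed
  have Dscale: "a *s v \<in> D" if "v \<in> D" for a v using Dsub that by (rule vec.subspace_scale)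
  have Dadd: "v + w \<in> D" if "v \<in> D" "w \<in> D" for v w using Dsub that by (rule vec.subspace_add)
  have GamD: "b - a \<in> D" if "a \<in> Gamma G" "b \<in> Gamma G" for a b
    using that GamE unfolding D_def by blast
  have TD: "T \<subseteq> D"
  proof
    fix t assume t: "t \<in> T"
    have "cplx_homothety 1 t \<circ> cplx_homothety l0 p0 \<in> G" using t lp0 Gcomp unfolding T_def by blast
    then have "cplx_homothety l0 (p0 + t) \<in> G" by (simp add: hom_comp add.commute)
    then have "(1/(1-l0)) *s (p0 + t) \<in> Gamma G" using GamI lp0 by blast
    then have "(1/(1-l0)) *s (p0 + t) - c0 \<in> D" using GamD c0G by blast
    then have "(1 - l0) *s ((1/(1-l0)) *s (p0 + t) - c0) \<in> D" by (rule Dscale)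
    moreover have "(1 - l0) *s ((1/(1-l0)) *s (p0 + t) - c0) = t"
      using lp0(2) unfolding c0_def by (simp add: vec_eq_iff field_simps)
    ultimately show "t \<in> D" by simp
  qed
  have K4: "g c0 - c0 \<in> D" if hg: "g \<in> G" for g
  proof -
    obtain l p where lp: "l \<noteq> 0" "g = cplx_homothety l p" using Gform[OF hg] by blast
    show ?thesis
    proof (cases "l = 1")
      case True
      then have "p \<in> T" using hg lp unfolding T_def by simp
      then show ?thesis using TD lp True by auto
    next
      case False
      have "(1/(1-l)) *s p \<in> Gamma G" using GamI hg lp False by blast
      then have "c0 - (1/(1-l)) *s p \<in> D" using GamD c0G by blast
      then have "(l - 1) *s (c0 - (1/(1-l)) *s p) \<in> D" by (rule Dscale)
      moreover have "(l - 1) *s (c0 - (1/(1-l)) *s p) = g c0 - c0"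
        using False unfolding lp by (simp add: vec_eq_iff field_simps)
      ultimately show ?thesis by (simp only:)
    qed
  qed
  have orbform: "g z = c0 + ratio g *s (z - c0) + (g c0 - c0)" if hg: "g \<in> G" for g z
  proof -
    obtain l p where lp: "l \<noteq> 0" "g = cplx_homothety l p" using Gform[OF hg] by blast
    show ?thesis unfolding lp by (simp add: vec_eq_iff algebra_simps)
  qed
  have orbI: "g z \<in> orbit G z" if "g \<in> G" for g z using that unfolding orbit_def by blast
  have orbE: "\<exists>g\<in>G. y = g z" if "y \<in> orbit G z" for y z using that unfolding orbit_def by blast
  have spanD: "vec.span D = D" using Dsub vec.span_eq_iff by blast
  have contc: "continuous_on UNIV (\<lambda>y. \<phi> (y - c0))" if "continuous_on UNIV \<phi>" for \<phi> :: "complex^'n \<Rightarrow> complex"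
    by (rule continuous_on_compose2[OF that]) (auto intro: continuous_intros)
  have PA: "closure (orbit G z) = UNIV" if hE: "E = UNIV" for z
  proof -
    have "(\<lambda>t. z + t) ` T \<subseteq> closure (orbit G z)"
    proof
      fix y assume "y \<in> (\<lambda>t. z + t) ` T"
      then obtain t where t: "t \<in> T" "y = z + t" by blast
      have "cplx_homothety 1 t z \<in> orbit G z" using t orbI unfolding T_def by blast
      then show "y \<in> closure (orbit G z)" using t closure_subset by (auto simp: add.commute)
    qed
    then have img: "(\<lambda>t. z + t) ` closure T \<subseteq> closure (orbit G z)"
      by (intro image_closure_subset) (auto intro: continuous_intros)
    have "y \<in> closure (orbit G z)" for y
    proof -
      have "y - z \<in> D" unfolding D_def using hE by blast
      then have "y - z \<in> closure T" using DC unfolding C_def by blast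
      then have "z + (y - z) \<in> closure (orbit G z)" using img by blast
      then show ?thesis by simp
    qed
    then show ?thesis by blast
  qed
  have PB: "closure (orbit G z) = UNIV"
    if hd: "vec.dim D = CARD('n) - 1" "closure (Lambda G) = UNIV" "z \<notin> E" for z
  proof -
    define w where "w = z - c0"
    have wD: "w \<notin> D" using Dmem[of w] hd(3) unfolding w_def by simp
    have "vec.dim (insert w D) = CARD('n)"
      using vec.dim_insert[of w D] wD spanD hd(1) by simp
    then have span: "vec.span (insert w D) = UNIV"
      using vec.dim_eq_full[of "insert w D"] by (simp add: vec.dimension_def card_cart_basis)
    have "y \<in> closure (orbit G z)" for y
    proof -
      have "y - c0 \<in> vec.span (insert w D)" using span by simp
      then obtain k where k: "y - c0 - k *s w \<in> D" unfolding vec.span_insert spanD by blast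
      define v where "v = y - c0 - k *s w"
      show ?thesis unfolding closure_approachable
      proof (intro allI impI)
        fix e :: real assume e: "e > 0"
        have "k \<in> closure (Lambda G)" using hd(2) by simp
        moreover have "e / (2 * (norm w + 1)) > 0"
          using e by (intro divide_pos_pos) (auto intro: add_nonneg_pos)
        ultimately obtain l where l: "l \<in> Lambda G" "dist l k < e / (2 * (norm w + 1))"
          unfolding closure_approachable by blast
        obtain p where p: "cplx_homothety l p \<in> G" "l \<noteq> 0" using Lam[OF l(1)] by blast
        define g where "g = cplx_homothety l p"
        have "(-1) *s (g c0 - c0) \<in> D" using Dscale K4 p(1) unfolding g_def by blast
        moreover have "(-1) *s (g c0 - c0) = - (g c0 - c0)" by (simp only: vector_smult_lneg vector_smult_lid)
        ultimately have "- (g c0 - c0) \<in> D" by (simp only:)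
        then have "v + - (g c0 - c0) \<in> D" using Dadd k unfolding v_def by blast
        moreover have "v + - (g c0 - c0) = v - (g c0 - c0)" by (simp only: diff_conv_add_uminus)
        ultimately have "v - (g c0 - c0) \<in> closure T" using DC unfolding C_def by (simp only:) blast
        moreover have "e / 2 > 0" using e by simp
        ultimately obtain t where t: "t \<in> T" "dist t (v - (g c0 - c0)) < e / 2"
          unfolding closure_approachable by blast
        have xo: "cplx_homothety 1 t (g z) \<in> orbit G z"
          using orbI[of "cplx_homothety 1 t \<circ> g" z] Gcomp t(1) p(1) unfolding T_def g_def by simp
        have gz: "g z = c0 + l *s w + (g c0 - c0)" using orbform[OF p(1)] unfolding g_def w_def by simp
        have "cplx_homothety 1 t (g z) - y = (l - k) *s w + (t - (v - (g c0 - c0)))"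
          unfolding gz v_def by (simp add: vec_eq_iff algebra_simps)
        then have "dist (cplx_homothety 1 t (g z)) y \<le> cmod (l - k) * norm w + dist t (v - (g c0 - c0))"
          by (metis dist_norm norm_smult_vec norm_triangle_ineq)
        also have "cmod (l - k) * norm w \<le> cmod (l - k) * (norm w + 1)" by (simp add: mult_left_mono)
        also have "cmod (l - k) * (norm w + 1) < e / 2"
        proof -
          have "cmod (l - k) < e / (2 * (norm w + 1))" using l(2) by (simp add: dist_norm)
          then show ?thesis using e by (simp add: field_simps add_pos_nonneg)
        qed
        finally show "\<exists>x\<in>orbit G z. dist x y < e" using xo t(2) by (intro bexI) auto
      qed
    qed
    then show ?thesis by blast
  qed
  have PC: "vec.dim D = CARD('n) - 1 \<and> closure (Lambda G) = UNIV"
    if hz: "closure (orbit G z) = UNIV" "E \<noteq> UNIV" for z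
  proof -
    define w where "w = z - c0"
    define S where "S = vec.span (insert w D)"
    have Sform: "S = {x. \<exists>k. x - k *s w \<in> D}" unfolding S_def vec.span_insert spanD ..
    have orbS: "y - c0 \<in> S" if hy: "y \<in> orbit G z" for y
    proof -
      obtain g where g: "g \<in> G" "y = g z" using orbE[OF hy] by blast
      have "y - c0 - ratio g *s w = g c0 - c0" using orbform[OF g(1), of z] g(2) unfolding w_def
        by (simp add: algebra_simps)
      then have "y - c0 - ratio g *s w \<in> D" using K4[OF g(1)] by (simp only:)
      then show ?thesis unfolding Sform by blast
    qed
    have SU: "S = UNIV"
    proof (rule ccontr)
      assume "S \<noteq> UNIV"
      then obtain u where u: "u \<notin> S" by blast
      have "vec.subspace S" unfolding S_def by (rule vec.subspace_span)
      from sep_functional[OF this u]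
      obtain \<phi> :: "complex^'n \<Rightarrow> complex" where phi: "continuous_on UNIV \<phi>" "\<forall>x\<in>S. \<phi> x = 0" "\<phi> u = 1"
        by blast
      have cl: "closed {y. \<phi> (y - c0) = 0}"
        by (rule closed_Collect_eq[OF contc[OF phi(1)]]) (rule continuous_on_const)
      have "orbit G z \<subseteq> {y. \<phi> (y - c0) = 0}" using orbS phi(2) by blast
      then have "closure (orbit G z) \<subseteq> {y. \<phi> (y - c0) = 0}" using cl by (rule closure_minimal)
      then have "\<phi> ((c0 + u) - c0) = 0" using hz(1) by blast
      then show False using phi(3) by simp
    qed
    obtain x0 where "x0 \<notin> E" using hz(2) by blast
    then have "x0 - c0 \<notin> D" using Dmem[of "x0 - c0"] by simp
    then have DU: "D \<noteq> UNIV" by blast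
    have wD: "w \<notin> D"
    proof
      assume wD: "w \<in> D"
      have "S \<subseteq> D"
      proof
        fix x assume "x \<in> S"
        then obtain k where "x - k *s w \<in> D" unfolding Sform by blast
        then have "(x - k *s w) + k *s w \<in> D" using Dadd Dscale wD by blast
        then show "x \<in> D" by simp
      qed
      then show False using SU DU by blast
    qed
    have "vec.dim S = CARD('n)" using SU vec_dim_card by simp
    moreover have "vec.dim S = vec.dim D + 1" unfolding S_def vec.dim_span
      using vec.dim_insert[of w D] wD spanD by simp
    ultimately have dimD: "vec.dim D = CARD('n) - 1" by simp
    obtain \<phi> where phi: "continuous_on UNIV \<phi>" "\<forall>x\<in>D. \<phi> x = 0" "\<phi> w = 1"
      "\<forall>a x. \<phi> (a *s x) = a * \<phi> x" "\<forall>x y. \<phi> (x + y) = \<phi> x + \<phi> y"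
      using sep_functional[OF Dsub wD] by blast
    have img: "(\<lambda>y. \<phi> (y - c0)) ` orbit G z \<subseteq> closure (Lambda G)"
    proof
      fix a assume "a \<in> (\<lambda>y. \<phi> (y - c0)) ` orbit G z"
      then obtain g where g: "g \<in> G" "a = \<phi> (g z - c0)" using orbE by blast
      have "g z - c0 = ratio g *s w + (g c0 - c0)" using orbform[OF g(1), of z] unfolding w_def
        by (simp add: algebra_simps)
      then have "a = \<phi> (ratio g *s w + (g c0 - c0))" using g(2) by (simp only:)
      also have "\<dots> = ratio g * \<phi> w + \<phi> (g c0 - c0)" using phi(4,5) by simp
      also have "\<dots> = ratio g" using phi(2,3) K4[OF g(1)] by simp
      finally have "a = ratio g" .
      moreover have "ratio g \<in> Lambda G" unfolding Lambda_def using g(1) by blast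
      ultimately show "a \<in> closure (Lambda G)" using closure_subset by blast
    qed
    have "(\<lambda>y. \<phi> (y - c0)) ` closure (orbit G z) \<subseteq> closure (Lambda G)"
      by (rule image_closure_subset[OF _ closed_closure img]) (rule continuous_on_subset[OF contc[OF phi(1)]], simp)
    then have "\<phi> ((c0 + m *s w) - c0) \<in> closure (Lambda G)" for m using hz(1) by blast
    then have "m \<in> closure (Lambda G)" for m using phi(3,4) by simp
    then show ?thesis using dimD by blast
  qed
  have cad: "cplx_affine_dim E = vec.dim D" unfolding cplx_affine_dim_def D_def ..
  have P1P3: "E = UNIV \<or> (vec.dim D = CARD('n) - 1 \<and> closure (Lambda G) = UNIV)"
    if "\<exists>z. closure (orbit G z) = UNIV"
    using that PC by blast
  have P3P2: "\<forall>z \<in> UNIV - E. closure (orbit G z) = UNIV"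
    if "E = UNIV \<or> (vec.dim D = CARD('n) - 1 \<and> closure (Lambda G) = UNIV)"
    using that PB by blast
  have P2P1: "\<exists>z. closure (orbit G z) = UNIV" if "\<forall>z \<in> UNIV - E. closure (orbit G z) = UNIV"
    using that PA by blast
  show ?thesis unfolding E_def[symmetric] cad using P1P3 P3P2 P2P1 by blast
qed

end
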